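(* Let $\mathbf{C}$ be a category enriched over $\mathbf{Top}$ all of whose morphisms are monomorphisms, let $C, D \in \mathrm{Ob}(\mathbf{C})$ be hom-equivalent, and let $\mathfrak{G} = (G_A)_{A \in \mathrm{Ob}(\mathbf{C})}$ be a family of groups with $G_A \le \mathrm{Aut}_\mathbf{C}(A)$ for all $A$. Let $A \in \mathrm{Ob}(\mathbf{C})$ be such that $\hom(A,C) \ne \varnothing$. (a) $T_\mathbf{C}(A,C) = T_\mathbf{C}(A,D)$. (b) If $\hom(A,S)$ is locally compact second-countable Hausdorff for every $S \in \mathrm{Ob}(\mathbf{C})$ and $G_A$ is a finite discrete group, then $T^\mathfrak{G}_\mathbf{C}(A,C) = T^\mathfrak{G}_\mathbf{C}(A,D)$.
   Context: Objects $C, D$ are hom-equivalent if $\hom(C,D) \ne \varnothing$ and $\hom(D,C) \ne\varnothing$. A category is enriched over $\mathbf{Top}$ if each homset is a topological space and composition is continuous. $\mathrm{Aut}_\mathbf{C}(A)$ is the group of invertible morphisms $A\to A$ with the subspace topology from $\hom(A,A)$. For $f,g \in \hom(A,X)$, $f \sim_\mathfrak{G} g$ iff $f = g\cdot\alpha$ for some $\alpha \in G_A$; $\binom{X}{A}_\mathfrak{G} = \hom(A,X)/{\sim_\mathfrak{G}}$ with the quotient topology; $w \cdot \binom{X}{A}_\mathfrak{G} = \{(w\cdot f)/{\sim_\mathfrak{G}} : f \in \hom(A,X)\}$ for $w\in\hom(X,Y)$. A Borel $k$-coloring is a map to $\{0,\dots,k-1\}$ with Borel fibers. $S \overset{\mathfrak{G}}{\longrightarrow}_\flat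 (S)^A_{k,n}$ means: every Borel $k$-coloring $\chi$ of $\binom{S}{A}_\mathfrak{G}$ admits $w \in \hom(S,S)$ with $|\chi(w \cdot \binom{S}{A}_\mathfrak{G})| \le n$. $T^\mathfrak{G}_\mathbf{C}(A,S)$ is the least positive integer $n$ with $S \overset{\mathfrak{G}}{\longrightarrow}_\flat (S)^A_{k,n}$ for all $k \ge 2$ ($\infty$ if none). $T_\mathbf{C}(A,S)$ is this quantity for the trivial groups $\{\mathrm{id}_A\}$ (Borel colorings of $\hom(A,S)$). *)

theory Defs
  imports "HOL-Analysis.Analysis"
begin

text \<open>Objects are all elements of the type 'o;
  morphisms live in type 'm. hom A B is the hom-set, cmp g f is g after f,
  idm A is the identity of A, and homtop A B is the topology on hom A B.\<close>

definition top_category ::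
  "('o \<Rightarrow> 'o \<Rightarrow> 'm set) \<Rightarrow> ('m \<Rightarrow> 'm \<Rightarrow> 'm) \<Rightarrow> ('o \<Rightarrow> 'm)
   \<Rightarrow> ('o \<Rightarrow> 'o \<Rightarrow> 'm topology) \<Rightarrow> bool" where
  "top_category hom cmp idm homtop \<longleftrightarrow>
     (\<forall>A B A' B'. hom A B \<inter> hom A' B' \<noteq> {} \<longrightarrow> A = A' \<and> B = B') \<and>
     (\<forall>A. idm A \<in> hom A A) \<and>
     (\<forall>A B C f g. f \<in> hom A B \<longrightarrow> g \<in> hom B C \<longrightarrow> cmp g f \<in> hom A C) \<and>
     (\<forall>A B f. f \<in> hom A B \<longrightarrow> cmp (idm B) f = f \<and> cmp f (idm A) = f) \<and>
     (\<forall>A B C D f g h. f \<in> hom A B \<longrightarrow> g \<in> hom B C \<longrightarrow> h \<in> hom C D \<longrightarrow>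
          cmp h (cmp g f) = cmp (cmp h g) f) \<and>
     (\<forall>A B. topspace (homtop A B) = hom A B) \<and>
     (\<forall>A B C. continuous_map (prod_topology (homtop B C) (homtop A B)) (homtop A C)
                 (\<lambda>(g, f). cmp g f))"

definition all_mono :: "('o \<Rightarrow> 'o \<Rightarrow> 'm set) \<Rightarrow> ('m \<Rightarrow> 'm \<Rightarrow> 'm) \<Rightarrow> bool" where
  "all_mono hom cmp \<longleftrightarrow>
     (\<forall>A B C f g h. f \<in> hom B C \<longrightarrow> g \<in> hom A B \<longrightarrow> h \<in> hom A B \<longrightarrow>
        cmp f g = cmp f h \<longrightarrow> g = h)"

definition hom_equiv :: "('o \<Rightarrow> 'o \<Rightarrow> 'm set) \<Rightarrow> 'o \<Rightarrow> 'o \<Rightarrow> bool" where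
  "hom_equiv hom C D \<longleftrightarrow> hom C D \<noteq> {} \<and> hom D C \<noteq> {}"

definition Aut :: "('o \<Rightarrow> 'o \<Rightarrow> 'm set) \<Rightarrow> ('m \<Rightarrow> 'm \<Rightarrow> 'm) \<Rightarrow> ('o \<Rightarrow> 'm) \<Rightarrow> 'o \<Rightarrow> 'm set" where
  "Aut hom cmp idm A = {f \<in> hom A A. \<exists>g \<in> hom A A. cmp g f = idm A \<and> cmp f g = idm A}"

definition aut_subgroup ::
  "('o \<Rightarrow> 'o \<Rightarrow> 'm set) \<Rightarrow> ('m \<Rightarrow> 'm \<Rightarrow> 'm) \<Rightarrow> ('o \<Rightarrow> 'm) \<Rightarrow> 'o \<Rightarrow> 'm set \<Rightarrow> bool" where
  "aut_subgroup hom cmp idm A H \<longleftrightarrow>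
     H \<subseteq> Aut hom cmp idm A \<and> idm A \<in> H \<and>
     (\<forall>f\<in>H. \<forall>g\<in>H. cmp f g \<in> H) \<and>
     (\<forall>f\<in>H. \<exists>g\<in>H. cmp g f = idm A \<and> cmp f g = idm A)"

definition quotient_top :: "'a topology \<Rightarrow> ('a \<Rightarrow> 'b) \<Rightarrow> 'b topology" where
  "quotient_top X p = topology (\<lambda>U. U \<subseteq> p ` topspace X \<and> openin X {x \<in> topspace X. p x \<in> U})"

definition borel_sets :: "'a topology \<Rightarrow> 'a set set" where
  "borel_sets X = sigma_sets (topspace X) {U. openin X U}"

definition gclass ::
  "('o \<Rightarrow> 'o \<Rightarrow> 'm set) \<Rightarrow> ('m \<Rightarrow> 'm \<Rightarrow> 'm) \<Rightarrow> ('o \<Rightarrow> 'm set) \<Rightarrow> 'o \<Rightarrow> 'o \<Rightarrow> 'm \<Rightarrow> 'm set" where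
  "gclass hom cmp G A X f = {g \<in> hom A X. \<exists>\<alpha>\<in>G A. f = cmp g \<alpha>}"

definition binom_top ::
  "('o \<Rightarrow> 'o \<Rightarrow> 'm set) \<Rightarrow> ('m \<Rightarrow> 'm \<Rightarrow> 'm) \<Rightarrow> ('o \<Rightarrow> 'o \<Rightarrow> 'm topology) \<Rightarrow> ('o \<Rightarrow> 'm set)
   \<Rightarrow> 'o \<Rightarrow> 'o \<Rightarrow> 'm set topology" where
  "binom_top hom cmp homtop G X A = quotient_top (homtop A X) (gclass hom cmp G A X)"

definition borel_coloring :: "'a topology \<Rightarrow> nat \<Rightarrow> ('a \<Rightarrow> nat) \<Rightarrow> bool" where
  "borel_coloring X k col \<longleftrightarrow> (\<forall>x\<in>topspace X. col x < k) \<and>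
     (\<forall>i<k. {x \<in> topspace X. col x = i} \<in> borel_sets X)"

definition arrow ::
  "('o \<Rightarrow> 'o \<Rightarrow> 'm set) \<Rightarrow> ('m \<Rightarrow> 'm \<Rightarrow> 'm) \<Rightarrow> ('o \<Rightarrow> 'o \<Rightarrow> 'm topology) \<Rightarrow> ('o \<Rightarrow> 'm set)
   \<Rightarrow> 'o \<Rightarrow> 'o \<Rightarrow> nat \<Rightarrow> nat \<Rightarrow> bool" where
  "arrow hom cmp homtop G S A k n \<longleftrightarrow>
     (\<forall>col. borel_coloring (binom_top hom cmp homtop G S A) k col \<longrightarrow>
        (\<exists>w\<in>hom S S. card (col ` (\<lambda>f. gclass hom cmp G A S (cmp w f)) ` hom A S) \<le> n))"

definition TG ::
  "('o \<Rightarrow> 'o \<Rightarrow> 'm set) \<Rightarrow> ('m \<Rightarrow> 'm \<Rightarrow> 'm) \<Rightarrow> ('o \<Rightarrow> 'o \<Rightarrow> 'm topology) \<Rightarrow> ('o \<Rightarrow> 'm set)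
   \<Rightarrow> 'o \<Rightarrow> 'o \<Rightarrow> enat" where
  "TG hom cmp homtop G A S =
     (if \<exists>n>0. \<forall>k\<ge>2. arrow hom cmp homtop G S A k n
      then enat (LEAST n. n > 0 \<and> (\<forall>k\<ge>2. arrow hom cmp homtop G S A k n))
      else \<infinity>)"

definition T ::
  "('o \<Rightarrow> 'o \<Rightarrow> 'm set) \<Rightarrow> ('m \<Rightarrow> 'm \<Rightarrow> 'm) \<Rightarrow> ('o \<Rightarrow> 'm) \<Rightarrow> ('o \<Rightarrow> 'o \<Rightarrow> 'm topology)
   \<Rightarrow> 'o \<Rightarrow> 'o \<Rightarrow> enat" where
  "T hom cmp idm homtop A S = TG hom cmp homtop (\<lambda>B. {idm B}) A S"

end

theory Submission
  imports Defs
begin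

lemma borel_preimage:
  assumes c: "continuous_map X Y g" and B: "B \<in> borel_sets Y"
  shows "{x \<in> topspace X. g x \<in> B} \<in> borel_sets X"
proof -
  have gP: "g \<in> topspace X \<rightarrow> topspace Y" using c by (auto simp: continuous_map_def)
  have "g -` B \<inter> topspace X \<in> {g -` A \<inter> topspace X |A. A \<in> sigma_sets (topspace Y) {U. openin Y U}}"
    using B unfolding borel_sets_def by blast
  also have "\<dots> = sigma_sets (topspace X) {g -` A \<inter> topspace X |A. A \<in> {U. openin Y U}}"
    by (rule sigma_sets_vimage_commute[OF gP])
  also have "\<dots> \<subseteq> sigma_sets (topspace X) {U. openin X U}"
  proof (rule sigma_sets_mono)
    show "{g -` A \<inter> topspace X |A. A \<in> {U. openin Y U}} \<subseteq> sigma_sets (topspace X) {U. openin X U}"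
    proof
      fix V assume "V \<in> {g -` A \<inter> topspace X |A. A \<in> {U. openin Y U}}"
      then obtain A where A: "openin Y A" "V = g -` A \<inter> topspace X" by blast
      have "openin X {x \<in> topspace X. g x \<in> A}" using c A(1) by (simp add: continuous_map_def)
      moreover have "{x \<in> topspace X. g x \<in> A} = V" using A(2) by auto
      ultimately show "V \<in> sigma_sets (topspace X) {U. openin X U}" by (auto intro: sigma_sets.Basic)
    qed
  qed
  finally show ?thesis unfolding borel_sets_def by (simp add: Int_def vimage_def conj_commute)
qed

lemma quotient_top_open:
  "openin (quotient_top X p) = (\<lambda>U. U \<subseteq> p ` topspace X \<and> openin X {x \<in> topspace X. p x \<in> U})"
  unfolding quotient_top_def
proof (rule topology_inverse')
  show "istopology (\<lambda>U. U \<subseteq> p ` topspace X \<and> openin X {x \<in> topspace X. p x \<in> U})"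
    unfolding istopology_def
  proof (rule conjI)
    show "\<forall>S T. S \<subseteq> p ` topspace X \<and> openin X {x \<in> topspace X. p x \<in> S} \<longrightarrow>
      T \<subseteq> p ` topspace X \<and> openin X {x \<in> topspace X. p x \<in> T} \<longrightarrow>
      S \<inter> T \<subseteq> p ` topspace X \<and> openin X {x \<in> topspace X. p x \<in> S \<inter> T}"
    proof (intro allI impI)
      fix S T assume S: "S \<subseteq> p ` topspace X \<and> openin X {x \<in> topspace X. p x \<in> S}"
        and T: "T \<subseteq> p ` topspace X \<and> openin X {x \<in> topspace X. p x \<in> T}"
      have "{x \<in> topspace X. p x \<in> S \<inter> T} = {x \<in> topspace X. p x \<in> S} \<inter> {x \<in> topspace X. p x \<in> T}" by auto
      then show "S \<inter> T \<subseteq> p ` topspace X \<and> openin X {x \<in> topspace X. p x \<in> S \<inter> T}"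
        using S T by auto
    qed
    show "\<forall>K. (\<forall>S\<in>K. S \<subseteq> p ` topspace X \<and> openin X {x \<in> topspace X. p x \<in> S}) \<longrightarrow>
      \<Union>K \<subseteq> p ` topspace X \<and> openin X {x \<in> topspace X. p x \<in> \<Union>K}"
    proof (intro allI impI)
      fix K assume K: "\<forall>S\<in>K. S \<subseteq> p ` topspace X \<and> openin X {x \<in> topspace X. p x \<in> S}"
      have "{x \<in> topspace X. p x \<in> \<Union>K} = (\<Union>S\<in>K. {x \<in> topspace X. p x \<in> S})" by auto
      then show "\<Union>K \<subseteq> p ` topspace X \<and> openin X {x \<in> topspace X. p x \<in> \<Union>K}"
        using K by auto
    qed
  qed
qed

lemma quotient_top_topspace: "topspace (quotient_top X p) = p ` topspace X"
proof -
  have "openin (quotient_top X p) (p ` topspace X)"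
  proof -
    have "{x \<in> topspace X. p x \<in> p ` topspace X} = topspace X" by auto
    then show ?thesis unfolding quotient_top_open by auto
  qed
  then have "p ` topspace X \<subseteq> topspace (quotient_top X p)" by (rule openin_subset)
  moreover have "topspace (quotient_top X p) \<subseteq> p ` topspace X"
    using openin_topspace[of "quotient_top X p"] unfolding quotient_top_open by blast
  ultimately show ?thesis by blast
qed


lemma cat_comp: "top_category hom cmp idm homtop \<Longrightarrow> f \<in> hom A B \<Longrightarrow> g \<in> hom B C \<Longrightarrow> cmp g f \<in> hom A C"
  unfolding top_category_def by (elim conjE) (simp only:)
lemma cat_id: "top_category hom cmp idm homtop \<Longrightarrow> idm A \<in> hom A A"
  unfolding top_category_def by (elim conjE) (simp only:)
lemma cat_idl: "top_category hom cmp idm homtop \<Longrightarrow> f \<in> hom A B \<Longrightarrow> cmp (idm B) f = f"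
  unfolding top_category_def by (elim conjE) (simp only:)
lemma cat_idr: "top_category hom cmp idm homtop \<Longrightarrow> f \<in> hom A B \<Longrightarrow> cmp f (idm A) = f"
  unfolding top_category_def by (elim conjE) (simp only:)
lemma cat_assoc: "top_category hom cmp idm homtop \<Longrightarrow> f \<in> hom A B \<Longrightarrow> g \<in> hom B C \<Longrightarrow> h \<in> hom C D \<Longrightarrow>
          cmp h (cmp g f) = cmp (cmp h g) f"
  unfolding top_category_def by (elim conjE) (simp only:)
lemma cat_top: "top_category hom cmp idm homtop \<Longrightarrow> topspace (homtop A B) = hom A B"
  unfolding top_category_def by (elim conjE) (simp only:)
lemma cat_cont: "top_category hom cmp idm homtop \<Longrightarrow>
   continuous_map (prod_topology (homtop B C) (homtop A B)) (homtop A C) (\<lambda>(g, f). cmp g f)"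
  unfolding top_category_def by (elim conjE) (simp only:)

lemma cat_cont_left:
  assumes cat: "top_category hom cmp idm homtop" and d: "d \<in> hom B C"
  shows "continuous_map (homtop A B) (homtop A C) (\<lambda>f. cmp d f)"
proof -
  have "continuous_map (homtop A B) (prod_topology (homtop B C) (homtop A B)) (\<lambda>f. (d, f))"
    using d cat_top[OF cat] by (simp add: continuous_map_paired)
  from continuous_map_compose[OF this cat_cont[OF cat]] show ?thesis by (simp add: o_def)
qed

locale gfam =
  fixes hom :: "'o \<Rightarrow> 'o \<Rightarrow> 'm set" and cmp :: "'m \<Rightarrow> 'm \<Rightarrow> 'm"
    and idm :: "'o \<Rightarrow> 'm" and homtop :: "'o \<Rightarrow> 'o \<Rightarrow> 'm topology"
    and G :: "'o \<Rightarrow> 'm set" and A :: 'o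
  assumes cat: "top_category hom cmp idm homtop"
    and Gsub: "\<And>\<alpha>. \<alpha> \<in> G A \<Longrightarrow> \<alpha> \<in> hom A A"
    and Gid: "idm A \<in> G A"
    and Gcomp: "\<And>\<alpha> \<beta>. \<alpha> \<in> G A \<Longrightarrow> \<beta> \<in> G A \<Longrightarrow> cmp \<alpha> \<beta> \<in> G A"
    and Ginv: "\<And>\<alpha>. \<alpha> \<in> G A \<Longrightarrow> \<exists>\<beta>\<in>G A. cmp \<alpha> \<beta> = idm A"
begin

lemma gclass_shift:
  assumes f: "f \<in> hom A X" and a: "\<alpha> \<in> G A"
  shows "gclass hom cmp G A X (cmp f \<alpha>) = gclass hom cmp G A X f"
proof
  show "gclass hom cmp G A X (cmp f \<alpha>) \<subseteq> gclass hom cmp G A X f"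
  proof
    fix g assume "g \<in> gclass hom cmp G A X (cmp f \<alpha>)"
    then obtain \<beta> where g: "g \<in> hom A X" and b: "\<beta> \<in> G A" and eq: "cmp f \<alpha> = cmp g \<beta>"
      unfolding gclass_def by blast
    obtain \<alpha>' where a': "\<alpha>' \<in> G A" "cmp \<alpha> \<alpha>' = idm A" using Ginv[OF a] by blast
    have "f = cmp f (cmp \<alpha> \<alpha>')" using a' cat_idr[OF cat f] by simp
    also have "\<dots> = cmp (cmp f \<alpha>) \<alpha>'" using cat_assoc[OF cat Gsub[OF a'(1)] Gsub[OF a] f] .
    also have "\<dots> = cmp (cmp g \<beta>) \<alpha>'" using eq by simp
    also have "\<dots> = cmp g (cmp \<beta> \<alpha>')" using cat_assoc[OF cat Gsub[OF a'(1)] Gsub[OF b] g] by simp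
    finally show "g \<in> gclass hom cmp G A X f" unfolding gclass_def using g Gcomp[OF b a'(1)] by blast
  qed
next
  show "gclass hom cmp G A X f \<subseteq> gclass hom cmp G A X (cmp f \<alpha>)"
  proof
    fix g assume "g \<in> gclass hom cmp G A X f"
    then obtain \<beta> where g: "g \<in> hom A X" and b: "\<beta> \<in> G A" and eq: "f = cmp g \<beta>"
      unfolding gclass_def by blast
    have "cmp f \<alpha> = cmp g (cmp \<beta> \<alpha>)" using eq cat_assoc[OF cat Gsub[OF a] Gsub[OF b] g] by simp
    then show "g \<in> gclass hom cmp G A X (cmp f \<alpha>)" unfolding gclass_def using g Gcomp[OF b a] by blast
  qed
qed

lemma gclass_self: "f \<in> hom A X \<Longrightarrow> f \<in> gclass hom cmp G A X f"
proof -
  assume f: "f \<in> hom A X"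
  have "f = cmp f (idm A)" using cat_idr[OF cat f] by simp
  then show ?thesis unfolding gclass_def using f Gid by blast
qed

lemma gclass_welldef:
  assumes f1: "f1 \<in> hom A X" and f2: "f2 \<in> hom A X" and d: "d \<in> hom X Y"
    and eq: "gclass hom cmp G A X f1 = gclass hom cmp G A X f2"
  shows "gclass hom cmp G A Y (cmp d f1) = gclass hom cmp G A Y (cmp d f2)"
proof -
  have "f1 \<in> gclass hom cmp G A X f2" using gclass_self[OF f1] eq by simp
  then obtain \<alpha> where a: "\<alpha> \<in> G A" and e: "f2 = cmp f1 \<alpha>" unfolding gclass_def by blast
  have "cmp d f2 = cmp (cmp d f1) \<alpha>" using e cat_assoc[OF cat Gsub[OF a] f1 d] by simp
  then show ?thesis using gclass_shift[OF cat_comp[OF cat f1 d] a] by simp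
qed

lemma topspace_binom: "topspace (binom_top hom cmp homtop G X A) = gclass hom cmp G A X ` hom A X"
  unfolding binom_top_def quotient_top_topspace cat_top[OF cat] ..

lemma open_binom: "openin (binom_top hom cmp homtop G X A) U \<longleftrightarrow>
   U \<subseteq> gclass hom cmp G A X ` hom A X \<and> openin (homtop A X) {x \<in> hom A X. gclass hom cmp G A X x \<in> U}"
  unfolding binom_top_def quotient_top_open cat_top[OF cat] ..

lemma arrow_transfer:
  assumes d: "d \<in> hom C D" and e: "e \<in> hom D C"
    and arr: "arrow hom cmp homtop G C A k n"
  shows "arrow hom cmp homtop G D A k n"
  unfolding arrow_def
proof (intro allI impI)
  fix col assume bc: "borel_coloring (binom_top hom cmp homtop G D A) k col"
  let ?qC = "gclass hom cmp G A C" and ?qD = "gclass hom cmp G A D"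
  let ?BC = "binom_top hom cmp homtop G C A" and ?BD = "binom_top hom cmp homtop G D A"
  define \<psi> where "\<psi> P = ?qD (cmp d (SOME f. f \<in> hom A C \<and> ?qC f = P))" for P
  have \<psi>q: "\<psi> (?qC f) = ?qD (cmp d f)" if f: "f \<in> hom A C" for f
  proof -
    have "\<exists>f'. f' \<in> hom A C \<and> ?qC f' = ?qC f" using f by blast
    then have "(SOME f'. f' \<in> hom A C \<and> ?qC f' = ?qC f) \<in> hom A C \<and>
       ?qC (SOME f'. f' \<in> hom A C \<and> ?qC f' = ?qC f) = ?qC f" by (rule someI_ex)
    then show ?thesis unfolding \<psi>_def using gclass_welldef[OF _ f d] by blast
  qed
  have \<psi>top: "\<psi> P \<in> topspace ?BD" if P: "P \<in> topspace ?BC" for P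
  proof -
    obtain f where f: "f \<in> hom A C" and Pf: "P = ?qC f" using P unfolding topspace_binom by blast
    have "cmp d f \<in> hom A D" by (rule cat_comp[OF cat f d])
    then show ?thesis unfolding topspace_binom Pf \<psi>q[OF f] by (rule imageI)
  qed
  have cd: "continuous_map (homtop A C) (homtop A D) (\<lambda>f. cmp d f)" by (rule cat_cont_left[OF cat d])
  have cont: "continuous_map ?BC ?BD \<psi>"
    unfolding continuous_map_def
  proof (intro conjI allI impI)
    show "\<psi> \<in> topspace ?BC \<rightarrow> topspace ?BD" using \<psi>top by blast
    fix U assume U: "openin ?BD U"
    then have U2: "openin (homtop A D) {x \<in> hom A D. ?qD x \<in> U}" by (simp add: open_binom)
    have "openin (homtop A C) {x \<in> topspace (homtop A C). cmp d x \<in> {x \<in> hom A D. ?qD x \<in> U}}"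
      by (rule openin_continuous_map_preimage[OF cd U2])
    moreover have "{x \<in> topspace (homtop A C). cmp d x \<in> {x \<in> hom A D. ?qD x \<in> U}}
       = {x \<in> hom A C. ?qC x \<in> {P \<in> topspace ?BC. \<psi> P \<in> U}}"
    proof (rule set_eqI, rule iffI)
      fix x assume "x \<in> {x \<in> topspace (homtop A C). cmp d x \<in> {x \<in> hom A D. ?qD x \<in> U}}"
      then have x: "x \<in> hom A C" "?qD (cmp d x) \<in> U" unfolding cat_top[OF cat] by auto
      then show "x \<in> {x \<in> hom A C. ?qC x \<in> {P \<in> topspace ?BC. \<psi> P \<in> U}}"
        unfolding topspace_binom using \<psi>q[OF x(1)] by auto
    next
      fix x assume "x \<in> {x \<in> hom A C. ?qC x \<in> {P \<in> topspace ?BC. \<psi> P \<in> U}}"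
      then have x: "x \<in> hom A C" "\<psi> (?qC x) \<in> U" by auto
      then show "x \<in> {x \<in> topspace (homtop A C). cmp d x \<in> {x \<in> hom A D. ?qD x \<in> U}}"
        unfolding cat_top[OF cat] using \<psi>q[OF x(1)] cat_comp[OF cat x(1) d] by auto
    qed
    ultimately show "openin ?BC {P \<in> topspace ?BC. \<psi> P \<in> U}"
      unfolding open_binom by (simp add: topspace_binom)
  qed
  define col' where "col' P = col (\<psi> P)" for P
  have bc': "borel_coloring ?BC k col'"
    unfolding borel_coloring_def
  proof (intro conjI ballI allI impI)
    fix P assume "P \<in> topspace ?BC"
    then show "col' P < k" using bc \<psi>top unfolding borel_coloring_def col'_def by blast
  next
    fix i assume i: "i < k"
    have "{Q \<in> topspace ?BD. col Q = i} \<in> borel_sets ?BD" using bc i unfolding borel_coloring_def by blast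
    note bp = borel_preimage[OF cont this]
    have "{P \<in> topspace ?BC. col' P = i} = {x \<in> topspace ?BC. \<psi> x \<in> {Q \<in> topspace ?BD. col Q = i}}"
      using \<psi>top unfolding col'_def by blast
    then show "{P \<in> topspace ?BC. col' P = i} \<in> borel_sets ?BC" using bp by simp
  qed
  from arr bc' obtain w where w: "w \<in> hom C C"
    and card: "card (col' ` (\<lambda>f. ?qC (cmp w f)) ` hom A C) \<le> n"
    unfolding arrow_def by blast
  define w' where "w' = cmp d (cmp w e)"
  have w': "w' \<in> hom D D" unfolding w'_def using cat_comp[OF cat e w] cat_comp[OF cat _ d] by blast
  have sub: "col ` (\<lambda>f. ?qD (cmp w' f)) ` hom A D \<subseteq> col' ` (\<lambda>f. ?qC (cmp w f)) ` hom A C"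
  proof
    fix x assume "x \<in> col ` (\<lambda>f. ?qD (cmp w' f)) ` hom A D"
    then obtain f where f: "f \<in> hom A D" and x: "x = col (?qD (cmp w' f))" by blast
    have ef: "cmp e f \<in> hom A C" using cat_comp[OF cat f e] .
    have wef: "cmp w (cmp e f) \<in> hom A C" using cat_comp[OF cat ef w] .
    have we: "cmp w e \<in> hom D C" using cat_comp[OF cat e w] .
    have "cmp w' f = cmp d (cmp (cmp w e) f)" unfolding w'_def using cat_assoc[OF cat f we d] by simp
    also have "\<dots> = cmp d (cmp w (cmp e f))" using cat_assoc[OF cat f e w] by simp
    finally have "x = col' (?qC (cmp w (cmp e f)))" unfolding x col'_def using \<psi>q[OF wef] by simp
    then show "x \<in> col' ` (\<lambda>f. ?qC (cmp w f)) ` hom A C" using ef by blast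
  qed
  have fin: "finite (col' ` (\<lambda>f. ?qC (cmp w f)) ` hom A C)"
  proof (rule finite_subset[of _ "{..<k}"])
    show "col' ` (\<lambda>f. ?qC (cmp w f)) ` hom A C \<subseteq> {..<k}"
    proof
      fix x assume "x \<in> col' ` (\<lambda>f. ?qC (cmp w f)) ` hom A C"
      then obtain f where f: "f \<in> hom A C" and x: "x = col' (?qC (cmp w f))" by blast
      have "?qC (cmp w f) \<in> topspace ?BC" unfolding topspace_binom using cat_comp[OF cat f w] by blast
      then show "x \<in> {..<k}" using bc' x unfolding borel_coloring_def by auto
    qed
  qed simp
  have "card (col ` (\<lambda>f. ?qD (cmp w' f)) ` hom A D) \<le> n"
    using card_mono[OF fin sub] card by linarith
  then show "\<exists>w\<in>hom D D. card (col ` (\<lambda>f. ?qD (cmp w f)) ` hom A D) \<le> n" using w' by blast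
qed

lemma TG_eq:
  assumes "hom C D \<noteq> {}" "hom D C \<noteq> {}"
  shows "TG hom cmp homtop G A C = TG hom cmp homtop G A D"
proof -
  obtain d e where d: "d \<in> hom C D" and e: "e \<in> hom D C" using assms by blast
  have "arrow hom cmp homtop G C A k n = arrow hom cmp homtop G D A k n" for k n
    using arrow_transfer[OF d e] arrow_transfer[OF e d] by blast
  then show ?thesis unfolding TG_def by simp
qed

end

theorem corollary4p10:
  fixes hom :: "'o \<Rightarrow> 'o \<Rightarrow> 'm set" and cmp :: "'m \<Rightarrow> 'm \<Rightarrow> 'm"
    and idm :: "'o \<Rightarrow> 'm" and homtop :: "'o \<Rightarrow> 'o \<Rightarrow> 'm topology"
    and G :: "'o \<Rightarrow> 'm set" and C D A :: 'o
  assumes cat: "top_category hom cmp idm homtop"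
    and mono: "all_mono hom cmp"
    and CD: "hom_equiv hom C D"
    and grp: "\<And>B. aut_subgroup hom cmp idm B (G B)"
    and AC: "hom A C \<noteq> {}"
  shows "T hom cmp idm homtop A C = T hom cmp idm homtop A D \<and>
         ((\<forall>S. locally_compact_space (homtop A S) \<and> second_countable (homtop A S)
              \<and> Hausdorff_space (homtop A S))
         \<and> finite (G A) \<and> subtopology (homtop A A) (G A) = discrete_topology (G A)
         \<longrightarrow> TG hom cmp homtop G A C = TG hom cmp homtop G A D)"
proof -
  have h: "hom C D \<noteq> {}" "hom D C \<noteq> {}" using CD unfolding hom_equiv_def by auto
  have g1: "gfam hom cmp idm homtop (\<lambda>B. {idm B}) A"
  proof unfold_locales
    show "top_category hom cmp idm homtop" by (rule cat)
    show "\<And>\<alpha>. \<alpha> \<in> {idm A} \<Longrightarrow> \<alpha> \<in> hom A A" using cat_id[OF cat] by simp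
    show "idm A \<in> {idm A}" by simp
    show "\<And>\<alpha> \<beta>. \<alpha> \<in> {idm A} \<Longrightarrow> \<beta> \<in> {idm A} \<Longrightarrow> cmp \<alpha> \<beta> \<in> {idm A}"
      using cat_idl[OF cat cat_id[OF cat]] by simp
    show "\<And>\<alpha>. \<alpha> \<in> {idm A} \<Longrightarrow> \<exists>\<beta>\<in>{idm A}. cmp \<alpha> \<beta> = idm A"
      using cat_idl[OF cat cat_id[OF cat]] by simp
  qed
  have ga: "aut_subgroup hom cmp idm A (G A)" by (rule grp)
  have g2: "gfam hom cmp idm homtop G A"
  proof unfold_locales
    show "top_category hom cmp idm homtop" by (rule cat)
    show "\<And>\<alpha>. \<alpha> \<in> G A \<Longrightarrow> \<alpha> \<in> hom A A" using ga unfolding aut_subgroup_def Aut_def by blast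
    show "idm A \<in> G A" using ga unfolding aut_subgroup_def by blast
    show "\<And>\<alpha> \<beta>. \<alpha> \<in> G A \<Longrightarrow> \<beta> \<in> G A \<Longrightarrow> cmp \<alpha> \<beta> \<in> G A"
      using ga unfolding aut_subgroup_def by blast
    show "\<And>\<alpha>. \<alpha> \<in> G A \<Longrightarrow> \<exists>\<beta>\<in>G A. cmp \<alpha> \<beta> = idm A"
      using ga unfolding aut_subgroup_def by blast
  qed
  show ?thesis
    unfolding T_def using gfam.TG_eq[OF g1 h] gfam.TG_eq[OF g2 h] by blast
qed

end
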